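(* Let $A,B,X$ be finite-dimensional real inner product spaces and $\alpha:A\to X$, $\beta:B\to X$ Riemannian submersions. Then there exists an inner product on the fiber product $C=A\times_{\alpha,\beta}B=\{(a,b)\in A\times B:\alpha(a)=\beta(b)\}$ such that both projections $\pi_A:C\to A$ and $\pi_B:C\to B$ are Riemannian submersions.
   Context: A linear surjection $T:E\to F$ between finite-dimensional inner product spaces is a Riemannian submersion if its restriction to $(\ker T)^\perp$ is an isometry onto $F$. *)

theory Defs
  imports "HOL-Analysis.Analysis"
begin

definition inner_product_on :: "'v::real_vector set \<Rightarrow> ('v \<Rightarrow> 'v \<Rightarrow> real) \<Rightarrow> bool" where
  "inner_product_on S g \<longleftrightarrow>
     subspace S \<and>
     (\<forall>x\<in>S. \<forall>y\<in>S. g x y = g y x) \<and>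
     (\<forall>x\<in>S. \<forall>y\<in>S. \<forall>z\<in>S. g (x + y) z = g x z + g y z) \<and>
     (\<forall>c. \<forall>x\<in>S. \<forall>y\<in>S. g (c *\<^sub>R x) y = c * g x y) \<and>
     (\<forall>x\<in>S. x \<noteq> 0 \<longrightarrow> g x x > 0)"

definition riemannian_submersion_on ::
  "'v::real_vector set \<Rightarrow> ('v \<Rightarrow> 'v \<Rightarrow> real) \<Rightarrow> 'w::real_vector set \<Rightarrow> ('w \<Rightarrow> 'w \<Rightarrow> real)
     \<Rightarrow> ('v \<Rightarrow> 'w) \<Rightarrow> bool" where
  "riemannian_submersion_on E g F h T \<longleftrightarrow>
     (\<forall>x\<in>E. \<forall>y\<in>E. T (x + y) = T x + T y) \<and>
     (\<forall>c. \<forall>x\<in>E. T (c *\<^sub>R x) = c *\<^sub>R T x) \<and>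
     T ` E = F \<and>
     (let K = {k\<in>E. T k = 0}; P = {v\<in>E. \<forall>k\<in>K. g v k = 0} in
        T ` P = F \<and> (\<forall>v\<in>P. \<forall>w\<in>P. h (T v) (T w) = g v w))"

end

theory Submission
  imports Defs
begin

lemma rs_linear:
  assumes "riemannian_submersion_on UNIV inner UNIV inner T"
  shows "linear T"
  using assms unfolding riemannian_submersion_on_def
  by (intro linearI) auto

lemma rs_horiz:
  assumes "riemannian_submersion_on UNIV inner UNIV inner (T::'a::euclidean_space \<Rightarrow> 'x::euclidean_space)"
  shows "\<exists>h. T h = y \<and> (\<forall>k. T k = 0 \<longrightarrow> inner h k = 0)"
proof -
  from assms have "T ` {v. \<forall>k\<in>{k. T k = 0}. inner v k = 0} = UNIV"
    unfolding riemannian_submersion_on_def Let_def by auto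
  then have "y \<in> T ` {v. \<forall>k\<in>{k. T k = 0}. inner v k = 0}" by simp
  then show ?thesis by auto
qed

lemma rs_iso:
  assumes "riemannian_submersion_on UNIV inner UNIV inner (T::'a::euclidean_space \<Rightarrow> 'x::euclidean_space)"
    and "\<forall>k. T k = 0 \<longrightarrow> inner v k = 0" "\<forall>k. T k = 0 \<longrightarrow> inner w k = 0"
  shows "inner (T v) (T w) = inner v w"
  using assms unfolding riemannian_submersion_on_def Let_def by auto

lemma rs_le:
  assumes "riemannian_submersion_on UNIV inner UNIV inner (T::'a::euclidean_space \<Rightarrow> 'x::euclidean_space)"
  shows "inner (T a) (T a) \<le> inner a a"
proof -
  have lin: "linear T" by (rule rs_linear[OF assms])
  obtain h where h: "T h = T a" "\<forall>k. T k = 0 \<longrightarrow> inner h k = 0"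
    using rs_horiz[OF assms] by blast
  have Tk: "T (a - h) = 0" using h(1) linear_diff[OF lin] by simp
  have o: "inner h (a - h) = 0" using h(2) Tk by blast
  have "inner (T a) (T a) = inner h h" using rs_iso[OF assms h(2) h(2)] h(1) by simp
  also have "\<dots> \<le> inner h h + inner (a - h) (a - h)" by simp
  also have "\<dots> = inner a a" using o
    by (simp add: inner_diff_left inner_diff_right inner_commute)
  finally show ?thesis .
qed

theorem lemma2p6:
  fixes \<alpha> :: "'a::euclidean_space \<Rightarrow> 'x::euclidean_space"
    and \<beta> :: "'b::euclidean_space \<Rightarrow> 'x"
  assumes "riemannian_submersion_on UNIV inner UNIV inner \<alpha>"
    and "riemannian_submersion_on UNIV inner UNIV inner \<beta>"
  shows "\<exists>g. inner_product_on {(a, b). \<alpha> a = \<beta> b} g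
           \<and> riemannian_submersion_on {(a, b). \<alpha> a = \<beta> b} g UNIV inner fst
           \<and> riemannian_submersion_on {(a, b). \<alpha> a = \<beta> b} g UNIV inner snd"
proof -
  have la: "linear \<alpha>" by (rule rs_linear[OF assms(1)])
  have lb: "linear \<beta>" by (rule rs_linear[OF assms(2)])
  define C where "C = {(a, b). \<alpha> a = \<beta> b}"
  define g :: "'a \<times> 'b \<Rightarrow> 'a \<times> 'b \<Rightarrow> real" where "g = (\<lambda>p q. inner (fst p) (fst q) + inner (snd p) (snd q)
                         - inner (\<alpha> (fst p)) (\<alpha> (fst q)))"
  have subC: "subspace C"
    unfolding C_def subspace_def
    using linear_add[OF la] linear_add[OF lb] linear_scale[OF la] linear_scale[OF lb]
      linear_0[OF la] linear_0[OF lb] by (auto simp: zero_prod_def)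
  have ip: "inner_product_on C g"
    unfolding inner_product_on_def
  proof (intro conjI ballI allI impI)
    show "subspace C" by (rule subC)
  next
    fix x y assume "x \<in> C" "y \<in> C" then show "g x y = g y x"
      unfolding g_def by (simp add: inner_commute)
  next
    fix x y z assume "x \<in> C" "y \<in> C" "z \<in> C" then show "g (x + y) z = g x z + g y z"
      unfolding g_def by (simp add: linear_add[OF la] inner_add_left)
  next
    fix c x y assume "x \<in> C" "y \<in> C" then show "g (c *\<^sub>R x) y = c * g x y"
      unfolding g_def by (simp add: linear_scale[OF la] algebra_simps)
  next
    fix x assume xC: "x \<in> C" and nz: "x \<noteq> 0"
    obtain a b where x: "x = (a, b)" by (cases x)
    have ab: "\<alpha> a = \<beta> b" using xC x C_def by simp
    have 1: "inner (\<alpha> a) (\<alpha> a) \<le> inner a a" by (rule rs_le[OF assms(1)])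
    have 2: "inner (\<beta> b) (\<beta> b) \<le> inner b b" by (rule rs_le[OF assms(2)])
    have "a \<noteq> 0 \<or> b \<noteq> 0" using nz x by (auto simp: zero_prod_def)
    then have "inner a a > 0 \<or> inner b b > 0" by auto
    moreover have "inner a a \<ge> 0" "inner b b \<ge> 0" by auto
    ultimately show "g x x > 0" unfolding g_def x using 1 2 ab
      by (simp, linarith)
  qed
  have rsA: "riemannian_submersion_on C g UNIV inner fst"
    unfolding riemannian_submersion_on_def Let_def
  proof (intro conjI)
    show "\<forall>x\<in>C. \<forall>y\<in>C. fst (x + y) = fst x + fst y" by simp
    show "\<forall>c. \<forall>x\<in>C. fst (c *\<^sub>R x) = c *\<^sub>R fst x" by simp
    let ?P = "{v \<in> C. \<forall>k\<in>{k \<in> C. fst k = 0}. g v k = 0}"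
    have sur: "fst ` ?P = UNIV"
    proof (rule sym, rule UNIV_eq_I)
      fix a :: 'a
      obtain h where h: "\<beta> h = \<alpha> a" "\<forall>k. \<beta> k = 0 \<longrightarrow> inner h k = 0"
        using rs_horiz[OF assms(2)] by blast
      have "(a, h) \<in> ?P"
      proof -
        have "(a, h) \<in> C" using h(1) by (simp add: C_def)
        moreover have "\<forall>q\<in>{k \<in> C. fst k = 0}. g (a, h) q = 0"
        proof
          fix q assume q: "q \<in> {k \<in> C. fst k = 0}"
          obtain k b where qq: "q = (k, b)" by (cases q)
          have "\<beta> b = 0" "k = 0" using q qq linear_0[OF la] by (auto simp: C_def)
          then show "g (a, h) q = 0" using h(2) linear_0[OF la] by (simp add: g_def qq)
        qed
        ultimately show ?thesis by blast
      qed
      then show "a \<in> fst ` ?P" by force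
    qed
    then show "fst ` ?P = UNIV" .
    show "fst ` C = UNIV" using sur by auto
    show "\<forall>v\<in>?P. \<forall>w\<in>?P. inner (fst v) (fst w) = g v w"
    proof (intro ballI)
      fix v w assume v: "v \<in> ?P" and w: "w \<in> ?P"
      obtain a b where vv: "v = (a, b)" by (cases v)
      obtain a' b' where ww: "w = (a', b')" by (cases w)
      have hb: "\<forall>k. \<beta> k = 0 \<longrightarrow> inner b k = 0"
      proof (intro allI impI)
        fix k assume "\<beta> k = 0"
        then have "(0, k) \<in> C" using linear_0[OF la] by (simp add: C_def)
        then have "g v (0, k) = 0" using v by auto
        then show "inner b k = 0" using linear_0[OF la] by (simp add: g_def vv)
      qed
      have hb': "\<forall>k. \<beta> k = 0 \<longrightarrow> inner b' k = 0"
      proof (intro allI impI)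
        fix k assume "\<beta> k = 0"
        then have "(0, k) \<in> C" using linear_0[OF la] by (simp add: C_def)
        then have "g w (0, k) = 0" using w by auto
        then show "inner b' k = 0" using linear_0[OF la] by (simp add: g_def ww)
      qed
      have e: "\<alpha> a = \<beta> b" "\<alpha> a' = \<beta> b'" using v w vv ww by (auto simp: C_def)
      show "inner (fst v) (fst w) = g v w"
        using rs_iso[OF assms(2) hb hb'] e by (simp add: g_def vv ww)
    qed
  qed
  have rsB: "riemannian_submersion_on C g UNIV inner snd"
    unfolding riemannian_submersion_on_def Let_def
  proof (intro conjI)
    show "\<forall>x\<in>C. \<forall>y\<in>C. snd (x + y) = snd x + snd y" by simp
    show "\<forall>c. \<forall>x\<in>C. snd (c *\<^sub>R x) = c *\<^sub>R snd x" by simp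
    let ?P = "{v \<in> C. \<forall>k\<in>{k \<in> C. snd k = 0}. g v k = 0}"
    have sur: "snd ` ?P = UNIV"
    proof (rule sym, rule UNIV_eq_I)
      fix b :: 'b
      obtain h where h: "\<alpha> h = \<beta> b" "\<forall>k. \<alpha> k = 0 \<longrightarrow> inner h k = 0"
        using rs_horiz[OF assms(1)] by blast
      have "(h, b) \<in> ?P"
      proof -
        have "(h, b) \<in> C" using h(1) by (simp add: C_def)
        moreover have "\<forall>q\<in>{k \<in> C. snd k = 0}. g (h, b) q = 0"
        proof
          fix q assume q: "q \<in> {k \<in> C. snd k = 0}"
          obtain k c where qq: "q = (k, c)" by (cases q)
          have "\<alpha> k = 0" "c = 0" using q qq linear_0[OF lb] by (auto simp: C_def)
          then show "g (h, b) q = 0" using h(2) by (simp add: g_def qq)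
        qed
        ultimately show ?thesis by blast
      qed
      then show "b \<in> snd ` ?P" by force
    qed
    then show "snd ` ?P = UNIV" .
    show "snd ` C = UNIV" using sur by auto
    show "\<forall>v\<in>?P. \<forall>w\<in>?P. inner (snd v) (snd w) = g v w"
    proof (intro ballI)
      fix v w assume v: "v \<in> ?P" and w: "w \<in> ?P"
      obtain a b where vv: "v = (a, b)" by (cases v)
      obtain a' b' where ww: "w = (a', b')" by (cases w)
      have ha: "\<forall>k. \<alpha> k = 0 \<longrightarrow> inner a k = 0"
      proof (intro allI impI)
        fix k assume k0: "\<alpha> k = 0"
        then have "(k, 0) \<in> C" using linear_0[OF lb] by (simp add: C_def)
        then have "g v (k, 0) = 0" using v by auto
        then show "inner a k = 0" using k0 by (simp add: g_def vv)
      qed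
      have ha': "\<forall>k. \<alpha> k = 0 \<longrightarrow> inner a' k = 0"
      proof (intro allI impI)
        fix k assume k0: "\<alpha> k = 0"
        then have "(k, 0) \<in> C" using linear_0[OF lb] by (simp add: C_def)
        then have "g w (k, 0) = 0" using w by auto
        then show "inner a' k = 0" using k0 by (simp add: g_def ww)
      qed
      show "inner (snd v) (snd w) = g v w"
        using rs_iso[OF assms(1) ha ha'] by (simp add: g_def vv ww)
    qed
  qed
  show ?thesis using ip rsA rsB unfolding C_def by blast
qed

end
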